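(* Let $\gamma\ge 1$ and let $\{b_n\}_{n\in\mathbb Z}$ be a real sequence with $b_n\ge 0$ for all $n$ and $\{b_n\}\in \ell^{\gamma+1/2}(\mathbb Z)$. Let $\{e_j\}$ be the positive eigenvalues of the operator on $\ell^2(\mathbb Z)$ $$\varphi(n)\mapsto \varphi(n+1)+\varphi(n-1)-2\varphi(n)+b_n\varphi(n),\qquad n\in\mathbb Z.$$ Then $$\sum_j |e_j|^\gamma\le \frac{\pi}{\sqrt3}\,L^{cl}_{\gamma,1}\sum_{n\in\mathbb Z} b_n^{\gamma+1/2},\qquad L^{cl}_{\gamma,1}=\frac{\Gamma(\gamma+1)}{2\sqrt\pi\,\Gamma(\gamma+3/2)}.$$
   Context: The operator is $-D^*D+b_n$ where $D\varphi(n)=\varphi(n+1)-\varphi(n)$ on $\ell^2(\mathbb Z)$ and $D^*\varphi(n)=-(\varphi(n)-\varphi(n-1))$; $b_n$ acts as multiplication. *)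

theory Defs
  imports "HOL-Analysis.Analysis"
begin

definition ell2 :: "(int \<Rightarrow> real) \<Rightarrow> bool" where
  "ell2 \<phi> \<longleftrightarrow> (\<lambda>n. (\<phi> n)\<^sup>2) summable_on UNIV"

definition schr_op :: "(int \<Rightarrow> real) \<Rightarrow> (int \<Rightarrow> real) \<Rightarrow> (int \<Rightarrow> real)" where
  "schr_op b \<phi> = (\<lambda>n. \<phi> (n + 1) + \<phi> (n - 1) - 2 * \<phi> n + b n * \<phi> n)"

definition is_eigenvalue :: "(int \<Rightarrow> real) \<Rightarrow> real \<Rightarrow> bool" where
  "is_eigenvalue b e \<longleftrightarrow> (\<exists>\<phi>. ell2 \<phi> \<and> \<phi> \<noteq> (\<lambda>_. 0) \<and> schr_op b \<phi> = (\<lambda>n. e * \<phi> n))"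

definition L_cl :: "real \<Rightarrow> real" where
  "L_cl \<gamma> = Gamma (\<gamma> + 1) / (2 * sqrt pi * Gamma (\<gamma> + 3/2))"

end

theory Submission
  imports Defs
begin

lemma has_sum_sum_fun:
  fixes f :: "'i \<Rightarrow> 'a \<Rightarrow> real"
  assumes "finite I" "\<And>i. i \<in> I \<Longrightarrow> (f i has_sum s i) A"
  shows "((\<lambda>x. \<Sum>i\<in>I. f i x) has_sum (\<Sum>i\<in>I. s i)) A"
  using assms
proof (induction I rule: finite_induct)
  case empty then show ?case by simp
next
  case (insert i I)
  then show ?case by (simp add: has_sum_add)
qed

lemma has_sum_diff_real:
  fixes f g :: "'a \<Rightarrow> real"
  assumes "(f has_sum a) A" "(g has_sum b) A"
  shows "((\<lambda>x. f x - g x) has_sum (a - b)) A"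
  using has_sum_add[OF assms(1) has_sum_uminusI[OF assms(2)]] by simp

lemma shift_has_sum:
  fixes f :: "int \<Rightarrow> real"
  shows "((\<lambda>n. f (n + c)) has_sum s) UNIV \<longleftrightarrow> (f has_sum s) UNIV"
proof -
  have b: "bij_betw (\<lambda>n. n + c) UNIV UNIV"
    by (rule bij_betwI[where g="\<lambda>n. n - c"]) auto
  show ?thesis using has_sum_reindex_bij_betw[OF b, of f s] by (simp add: o_def)
qed

lemma ell2_shift: "ell2 \<phi> \<Longrightarrow> ell2 (\<lambda>n. \<phi> (n + c))"
  unfolding ell2_def summable_on_def using shift_has_sum[of "\<lambda>n. (\<phi> n)\<^sup>2" c] by auto

lemma absprod: "\<bar>x*y\<bar> \<le> x^2 + (y::real)^2"
proof -
  have "0 \<le> (\<bar>x\<bar>-\<bar>y\<bar>)^2" by simp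
  hence "2*\<bar>x\<bar>*\<bar>y\<bar> \<le> x^2+y^2" by (simp add: power2_diff)
  moreover have "0 \<le> \<bar>x\<bar>*\<bar>y\<bar>" by simp
  ultimately show ?thesis unfolding abs_mult by linarith
qed

lemma ell2_prod_summable:
  assumes "ell2 \<phi>" "ell2 \<psi>"
  shows "(\<lambda>n. \<phi> n * \<psi> n) summable_on UNIV"
proof -
  have s: "(\<lambda>n. (\<phi> n)\<^sup>2 + (\<psi> n)\<^sup>2) summable_on UNIV"
    using assms unfolding ell2_def by (rule summable_on_add)
  have "(\<lambda>n. \<bar>\<phi> n * \<psi> n\<bar>) summable_on UNIV"
    proof (rule summable_on_comparison_test[OF s])
    fix n show "\<bar>\<phi> n * \<psi> n\<bar> \<le> (\<phi> n)\<^sup>2 + (\<psi> n)\<^sup>2"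
      by (rule absprod)
  qed auto
  then show ?thesis
    by (subst summable_on_iff_abs_summable_on_real) simp
qed

definition ip :: "(int \<Rightarrow> real) \<Rightarrow> (int \<Rightarrow> real) \<Rightarrow> real" where
  "ip f g = (\<Sum>\<^sub>\<infinity>n. f n * g n)"
definition lap :: "(int \<Rightarrow> real) \<Rightarrow> int \<Rightarrow> real" where
  "lap \<psi> n = \<psi> (n + 1) + \<psi> (n - 1) - 2 * \<psi> n"
definition Dd :: "(int \<Rightarrow> real) \<Rightarrow> int \<Rightarrow> real" where
  "Dd \<phi> n = \<phi> (n + 1) - \<phi> n"

lemma ip_has_sum: "ell2 f \<Longrightarrow> ell2 g \<Longrightarrow> ((\<lambda>n. f n * g n) has_sum ip f g) UNIV"
  unfolding ip_def using ell2_prod_summable has_sum_infsum by blast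

lemma ell2_lin:
  assumes "ell2 f" "ell2 g"
  shows "ell2 (\<lambda>n. a * f n + c * g n)"
proof -
  have "(\<lambda>n. a^2 * (f n)\<^sup>2 + (2*a*c) * (f n * g n) + c^2 * (g n)\<^sup>2) summable_on UNIV"
    using assms ell2_prod_summable[OF assms] unfolding ell2_def
    by (intro summable_on_add summable_on_cmult_right)
  then show ?thesis unfolding ell2_def by (simp add: power2_eq_square algebra_simps)
qed

lemma ell2_scale: "ell2 f \<Longrightarrow> ell2 (\<lambda>n. a * f n)"
  using ell2_lin[of f f a 0] by simp

lemma ell2_Dd: "ell2 f \<Longrightarrow> ell2 (Dd f)"
  using ell2_lin[OF ell2_shift[of f 1], of f 1 "-1"] unfolding Dd_def by simp

lemma ell2_lap: "ell2 f \<Longrightarrow> ell2 (lap f)"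
proof -
  assume f: "ell2 f"
  have "ell2 (\<lambda>n. 1 * f (n+1) + 1 * f (n + -1))" by (rule ell2_lin[OF ell2_shift ell2_shift]) (use f in auto)
  then have "ell2 (\<lambda>n. 1 * (1 * f (n+1) + 1 * f (n + -1)) + (-2) * f n)" by (rule ell2_lin[OF _ f])
  then show ?thesis unfolding lap_def by simp
qed

lemma sbp:
  assumes f: "ell2 \<phi>" and g: "ell2 \<psi>"
  shows "((\<lambda>n. \<phi> n * lap \<psi> n) has_sum - ip (Dd \<phi>) (Dd \<psi>)) UNIV"
proof -
  define P where "P = ip \<phi> \<psi>"
  define A where "A = ip \<phi> (\<lambda>n. \<psi> (n+1))"
  define C where "C = ip (\<lambda>n. \<phi> (n+1)) \<psi>"
  have hP: "((\<lambda>n. \<phi> n * \<psi> n) has_sum P) UNIV" unfolding P_def by (rule ip_has_sum[OF f g])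
  have hP1: "((\<lambda>n. \<phi> (n+1) * \<psi> (n+1)) has_sum P) UNIV"
    using shift_has_sum[of "\<lambda>n. \<phi> n * \<psi> n" 1 P] hP by simp
  have hA: "((\<lambda>n. \<phi> n * \<psi> (n+1)) has_sum A) UNIV" unfolding A_def by (rule ip_has_sum[OF f ell2_shift[OF g]])
  have hC: "((\<lambda>n. \<phi> (n+1) * \<psi> n) has_sum C) UNIV" unfolding C_def by (rule ip_has_sum[OF ell2_shift[OF f] g])
  have hB: "((\<lambda>n. \<phi> n * \<psi> (n-1)) has_sum C) UNIV"
  proof -
    have "((\<lambda>n. \<phi> (n+1) * \<psi> (n+1-1)) has_sum C) UNIV" using hC by simp
    then show ?thesis using shift_has_sum[of "\<lambda>n. \<phi> n * \<psi> (n-1)" 1 C] by simp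
  qed
  have hD: "((\<lambda>n. Dd \<phi> n * Dd \<psi> n) has_sum ip (Dd \<phi>) (Dd \<psi>)) UNIV"
    by (rule ip_has_sum[OF ell2_Dd[OF f] ell2_Dd[OF g]])
  have hD2: "((\<lambda>n. \<phi> (n+1) * \<psi> (n+1) - \<phi> (n+1) * \<psi> n - \<phi> n * \<psi> (n+1) + \<phi> n * \<psi> n) has_sum (P - C - A + P)) UNIV"
    by (intro has_sum_add has_sum_diff_real hP hP1 hA hC)
  have "(\<lambda>n. \<phi> (n+1) * \<psi> (n+1) - \<phi> (n+1) * \<psi> n - \<phi> n * \<psi> (n+1) + \<phi> n * \<psi> n) = (\<lambda>n. Dd \<phi> n * Dd \<psi> n)"
    by (auto simp: Dd_def algebra_simps)
  with hD2 hD have eq: "ip (Dd \<phi>) (Dd \<psi>) = P - C - A + P" using has_sum_unique by metis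
  have "((\<lambda>n. \<phi> n * \<psi> (n+1) + \<phi> n * \<psi> (n-1) - 2 * (\<phi> n * \<psi> n)) has_sum (A + C - 2 * P)) UNIV"
    by (intro has_sum_add has_sum_diff_real hA hB has_sum_cmult_right hP)
  moreover have "(\<lambda>n. \<phi> n * \<psi> (n+1) + \<phi> n * \<psi> (n-1) - 2 * (\<phi> n * \<psi> n)) = (\<lambda>n. \<phi> n * lap \<psi> n)"
    by (auto simp: lap_def algebra_simps)
  ultimately show ?thesis using eq by simp
qed

definition eig :: "(int \<Rightarrow> real) \<Rightarrow> real \<Rightarrow> (int \<Rightarrow> real) \<Rightarrow> bool" where
  "eig b e \<phi> \<longleftrightarrow> ell2 \<phi> \<and> (\<forall>n. lap \<phi> n + b n * \<phi> n = e * \<phi> n)"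

lemma ip_comm: "ip f g = ip g f"
  unfolding ip_def by (simp add: mult.commute)

lemma eig_bsum:
  assumes f: "ell2 \<phi>" and g: "eig b e \<psi>"
  shows "((\<lambda>n. b n * \<phi> n * \<psi> n) has_sum (e * ip \<phi> \<psi> + ip (Dd \<phi>) (Dd \<psi>))) UNIV"
proof -
  have g2: "ell2 \<psi>" using g eig_def by blast
  have "((\<lambda>n. e * (\<phi> n * \<psi> n) - \<phi> n * lap \<psi> n) has_sum (e * ip \<phi> \<psi> - - ip (Dd \<phi>) (Dd \<psi>))) UNIV"
    by (intro has_sum_diff_real has_sum_cmult_right ip_has_sum sbp f g2)
  moreover have "(\<lambda>n. e * (\<phi> n * \<psi> n) - \<phi> n * lap \<psi> n) = (\<lambda>n. b n * \<phi> n * \<psi> n)"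
  proof
    fix n
    have E: "lap \<psi> n = e * \<psi> n - b n * \<psi> n" using g unfolding eig_def by (metis add_diff_cancel_right')
    show "e * (\<phi> n * \<psi> n) - \<phi> n * lap \<psi> n = b n * \<phi> n * \<psi> n" unfolding E by (simp add: algebra_simps)
  qed
  ultimately show ?thesis by simp
qed

lemma eig_orth:
  assumes f: "eig b e \<phi>" and g: "eig b e' \<psi>" and ne: "e \<noteq> e'"
  shows "ip \<phi> \<psi> = 0"
proof -
  have f2: "ell2 \<phi>" and g2: "ell2 \<psi>" using f g eig_def by blast+
  note h1 = eig_bsum[OF f2 g]
  note h2 = eig_bsum[OF g2 f]
  have "(\<lambda>n. b n * \<psi> n * \<phi> n) = (\<lambda>n. b n * \<phi> n * \<psi> n)" by (auto simp: algebra_simps)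
  with h2 have h2': "((\<lambda>n. b n * \<phi> n * \<psi> n) has_sum (e * ip \<phi> \<psi> + ip (Dd \<phi>) (Dd \<psi>))) UNIV"
    by (simp add: ip_comm[of \<psi>] ip_comm[of "Dd \<psi>"])
  from has_sum_unique[OF h1 h2'] have "(e' - e) * ip \<phi> \<psi> = 0" by (simp add: algebra_simps)
  with ne show ?thesis by simp
qed

lemma ip_pos:
  assumes "ell2 \<phi>" "\<phi> \<noteq> (\<lambda>_. 0)"
  shows "ip \<phi> \<phi> > 0"
proof -
  obtain n0 where n0: "\<phi> n0 \<noteq> 0" using assms(2) by auto
  have "sum (\<lambda>n. \<phi> n * \<phi> n) {n0} \<le> ip \<phi> \<phi>"
    unfolding ip_def by (rule finite_sum_le_infsum) (use ell2_prod_summable[OF assms(1) assms(1)] in auto)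
  moreover have "\<phi> n0 * \<phi> n0 > 0" using n0 by (metis power2_eq_square zero_less_power2)
  ultimately show ?thesis by simp
qed

lemma ip_scale: "ell2 f \<Longrightarrow> ell2 g \<Longrightarrow> ip (\<lambda>n. a * f n) (\<lambda>n. c * g n) = a * c * ip f g"
proof -
  assume f: "ell2 f" and g: "ell2 g"
  have "(\<lambda>n. a * f n * (c * g n)) = (\<lambda>n. (a*c) * (f n * g n))" by (auto simp: algebra_simps)
  then show ?thesis unfolding ip_def by (simp add: infsum_cmult_right ell2_prod_summable[OF f g])
qed

lemma normalize_eig:
  assumes "is_eigenvalue b e"
  shows "\<exists>\<phi>. eig b e \<phi> \<and> ip \<phi> \<phi> = 1"
proof -
  obtain \<phi> where p: "ell2 \<phi>" "\<phi> \<noteq> (\<lambda>_. 0)" "schr_op b \<phi> = (\<lambda>n. e * \<phi> n)"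
    using assms unfolding is_eigenvalue_def by blast
  define a where "a = 1 / sqrt (ip \<phi> \<phi>)"
  have pos: "ip \<phi> \<phi> > 0" by (rule ip_pos[OF p(1,2)])
  define \<psi> where "\<psi> = (\<lambda>n. a * \<phi> n)"
  have "ell2 \<psi>" unfolding \<psi>_def by (rule ell2_scale[OF p(1)])
  moreover have "\<forall>n. lap \<psi> n + b n * \<psi> n = e * \<psi> n"
  proof
    fix n
    have "schr_op b \<phi> n = e * \<phi> n" using p(3) by simp
    then have "lap \<phi> n + b n * \<phi> n = e * \<phi> n" unfolding schr_op_def lap_def by simp
    then have "a * (lap \<phi> n + b n * \<phi> n) = a * (e * \<phi> n)" by simp
    then show "lap \<psi> n + b n * \<psi> n = e * \<psi> n" unfolding \<psi>_def lap_def by (simp add: algebra_simps)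
  qed
  moreover have "ip \<psi> \<psi> = 1"
    unfolding \<psi>_def using ip_scale[OF p(1) p(1), of a a] pos
    by (simp add: a_def power2_eq_square[symmetric] power_divide real_sqrt_pow2 less_imp_le)
  ultimately show ?thesis unfolding eig_def by blast
qed

lemma agmon_pt:
  fixes a c l s :: real
  assumes "l > 0" "s = 1 \<or> s = -1"
  shows "s * (a\<^sup>2 - c\<^sup>2) \<le> l / 2 * (c - a)\<^sup>2 + (a\<^sup>2 + c\<^sup>2) / l"
proof -
  have id: "l * (l / 2 * (c - a)\<^sup>2 + (a\<^sup>2 + c\<^sup>2) / l) - l * (s * (a\<^sup>2 - c\<^sup>2)) = (l*(c-a) + s*(a+c))\<^sup>2/2 + (a-c)\<^sup>2/2"
    using assms by (auto simp: field_simps power2_eq_square)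
  have "0 \<le> (l*(c-a) + s*(a+c))\<^sup>2/2 + (a-c)\<^sup>2/2" by simp
  then have "l * (s * (a\<^sup>2 - c\<^sup>2)) \<le> l * (l / 2 * (c - a)\<^sup>2 + (a\<^sup>2 + c\<^sup>2) / l)" using id by linarith
  then show ?thesis using assms(1) by simp
qed

lemma agmon_real:
  fixes x A G :: real
  assumes "0 \<le> x" "x \<le> G" "0 \<le> A" "\<And>l. l > 0 \<Longrightarrow> 2 * x \<le> l / 2 * A + 2 * G / l"
  shows "x\<^sup>2 \<le> A * G"
proof (cases "x = 0")
  case True
  then show ?thesis using assms by simp
next
  case False
  then have xp: "x > 0" using assms(1) by simp
  then have Gp: "G > 0" using assms(2) by simp
  from assms(4)[of "2 * G / x"] xp Gp
  have "2 * x \<le> (2 * G / x) / 2 * A + 2 * G / (2 * G / x)" by simp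
  also have "2 * G / (2 * G / x) = x" using xp Gp by simp
  finally have "x \<le> G / x * A" by simp
  then have "x * x \<le> G * A" using xp by (simp add: field_simps)
  then show ?thesis by (simp add: power2_eq_square mult.commute)
qed

lemma ip_self_nonneg: "ip f f \<ge> 0"
  unfolding ip_def by (rule infsum_nonneg) simp

lemma pt_le_ip: "ell2 g \<Longrightarrow> (g n)\<^sup>2 \<le> ip g g"
proof -
  assume g: "ell2 g"
  have "sum (\<lambda>n. g n * g n) {n} \<le> ip g g"
    unfolding ip_def by (rule finite_sum_le_infsum) (use ell2_prod_summable[OF g g] in auto)
  then show ?thesis by (simp add: power2_eq_square)
qed

lemma agmon:
  assumes g: "ell2 g"
  shows "((g n)\<^sup>2)\<^sup>2 \<le> ip (Dd g) (Dd g) * ip g g"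
proof (rule agmon_real)
  show "0 \<le> (g n)\<^sup>2" by simp
  show "(g n)\<^sup>2 \<le> ip g g" by (rule pt_le_ip[OF g])
  show "0 \<le> ip (Dd g) (Dd g)" by (rule ip_self_nonneg)
  fix l :: real assume l: "l > 0"
  define s where "s m = (if m \<ge> n then 1 else - 1 :: real)" for m
  define u where "u m = s m * (g m)\<^sup>2" for m
  have g2: "((\<lambda>m. g m * g m) has_sum ip g g) UNIV" by (rule ip_has_sum[OF g g])
  have us: "u summable_on UNIV"
  proof -
    have "(\<lambda>m. \<bar>u m\<bar>) summable_on UNIV"
      by (rule summable_on_comparison_test[OF g[unfolded ell2_def]]) (auto simp: u_def s_def abs_mult)
    then show ?thesis by (subst summable_on_iff_abs_summable_on_real) simp
  qed
  obtain U where hU: "(u has_sum U) UNIV" using us summable_on_def by blast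
  have hU1: "((\<lambda>m. u (m+1)) has_sum U) UNIV" using shift_has_sum[of u 1 U] hU by simp
  have hfin: "((\<lambda>m. if m = n - 1 then 2 * (g n)\<^sup>2 else 0) has_sum (2 * (g n)\<^sup>2)) UNIV"
    by (rule has_sum_finite_neutralI[where B = "{n-1}"]) auto
  have hT: "((\<lambda>m. u m - u (m+1) + (if m = n - 1 then 2 * (g n)\<^sup>2 else 0)) has_sum (U - U + 2 * (g n)\<^sup>2)) UNIV"
    by (intro has_sum_add has_sum_diff_real hU hU1 hfin)
  have Teq: "u m - u (m+1) + (if m = n - 1 then 2 * (g n)\<^sup>2 else 0) = s m * ((g m)\<^sup>2 - (g (m+1))\<^sup>2)" for m
    by (auto simp: u_def s_def algebra_simps)
  have hT': "((\<lambda>m. s m * ((g m)\<^sup>2 - (g (m+1))\<^sup>2)) has_sum 2 * (g n)\<^sup>2) UNIV"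
    using hT unfolding Teq by simp
  have hR: "((\<lambda>m. l / 2 * (Dd g m * Dd g m) + (g m * g m + g (m+1) * g (m+1)) / l) has_sum
      (l / 2 * ip (Dd g) (Dd g) + (ip g g + ip g g) / l)) UNIV"
  proof -
    have h1: "((\<lambda>m. g (m+1) * g (m+1)) has_sum ip g g) UNIV" using shift_has_sum[of "\<lambda>m. g m * g m" 1] g2 by simp
    show ?thesis
      by (intro has_sum_add has_sum_cmult_right ip_has_sum ell2_Dd g has_sum_divide_const h1 g2)
  qed
  have "2 * (g n)\<^sup>2 \<le> l / 2 * ip (Dd g) (Dd g) + (ip g g + ip g g) / l"
  proof (rule has_sum_mono[OF hT' hR])
    fix m
    have "s m = 1 \<or> s m = -1" by (simp add: s_def)
    from agmon_pt[OF l this, of "g m" "g (m+1)"]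
    show "s m * ((g m)\<^sup>2 - (g (m+1))\<^sup>2) \<le> l / 2 * (Dd g m * Dd g m) + (g m * g m + g (m+1) * g (m+1)) / l"
      by (simp add: Dd_def power2_eq_square)
  qed
  then show "2 * (g n)\<^sup>2 \<le> l / 2 * ip (Dd g) (Dd g) + 2 * ip g g / l" by simp
qed

lemma ell2_sum:
  assumes "finite J" "\<And>j. j \<in> J \<Longrightarrow> ell2 (f j)"
  shows "ell2 (\<lambda>m. \<Sum>j\<in>J. a j * f j m)"
  using assms
proof (induction J rule: finite_induct)
  case empty then show ?case by (simp add: ell2_def)
next
  case (insert i J)
  then have "ell2 (\<lambda>m. a i * f i m + 1 * (\<Sum>j\<in>J. a j * f j m))"
    by (intro ell2_lin) auto
  then show ?case using insert by simp
qed

lemma Dd_sum: "Dd (\<lambda>m. \<Sum>j\<in>J. a j * f j m) = (\<lambda>m. \<Sum>j\<in>J. a j * Dd (f j) m)"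
  by (auto simp: Dd_def sum_subtractf[symmetric] algebra_simps)

lemma ip_sum:
  assumes "finite J" "finite K" "\<And>j. j \<in> J \<Longrightarrow> ell2 (f j)" "\<And>k. k \<in> K \<Longrightarrow> ell2 (g k)"
  shows "ip (\<lambda>m. \<Sum>j\<in>J. a j * f j m) (\<lambda>m. \<Sum>k\<in>K. c k * g k m) = (\<Sum>j\<in>J. \<Sum>k\<in>K. a j * c k * ip (f j) (g k))"
proof -
  have h: "((\<lambda>m. \<Sum>j\<in>J. \<Sum>k\<in>K. a j * c k * (f j m * g k m)) has_sum (\<Sum>j\<in>J. \<Sum>k\<in>K. a j * c k * ip (f j) (g k))) UNIV"
    using assms by (intro has_sum_sum_fun has_sum_cmult_right ip_has_sum) auto
  have "(\<lambda>m. (\<Sum>j\<in>J. a j * f j m) * (\<Sum>k\<in>K. c k * g k m)) = (\<lambda>m. \<Sum>j\<in>J. \<Sum>k\<in>K. a j * c k * (f j m * g k m))"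
    by (auto simp: sum_product algebra_simps)
  with h show ?thesis unfolding ip_def by (simp add: infsumI)
qed

lemma eden_foias:
  fixes \<phi> :: "nat \<Rightarrow> int \<Rightarrow> real"
  assumes J: "finite J" and ell: "\<And>j. j \<in> J \<Longrightarrow> ell2 (\<phi> j)"
    and on: "\<And>i j. i \<in> J \<Longrightarrow> j \<in> J \<Longrightarrow> ip (\<phi> i) (\<phi> j) = (if i = j then 1 else 0)"
  defines "\<rho> \<equiv> \<lambda>n. \<Sum>j\<in>J. (\<phi> j n)\<^sup>2"
  shows "(\<lambda>n. (\<rho> n)^3) summable_on UNIV \<and> (\<Sum>\<^sub>\<infinity>n. (\<rho> n)^3) \<le> (\<Sum>j\<in>J. ip (Dd (\<phi> j)) (Dd (\<phi> j)))"
proof -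
  define K where "K i j = ip (Dd (\<phi> i)) (Dd (\<phi> j))" for i j
  define Q where "Q n = (\<Sum>i\<in>J. \<Sum>j\<in>J. \<phi> i n * \<phi> j n * K i j)" for n
  have ptw: "(\<rho> n)^3 \<le> Q n \<and> 0 \<le> (\<rho> n)^3" for n
  proof -
    define g where "g = (\<lambda>m. \<Sum>j\<in>J. \<phi> j n * \<phi> j m)"
    have gl: "ell2 g" unfolding g_def by (rule ell2_sum[OF J ell])
    have gn: "g n = \<rho> n" unfolding g_def \<rho>_def by (simp add: power2_eq_square)
    have gg: "ip g g = \<rho> n"
    proof -
      have "ip g g = (\<Sum>i\<in>J. \<Sum>j\<in>J. \<phi> i n * \<phi> j n * ip (\<phi> i) (\<phi> j))"
        unfolding g_def by (rule ip_sum[OF J J ell ell])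
      also have "\<dots> = (\<Sum>i\<in>J. \<Sum>j\<in>J. if i = j then \<phi> i n * \<phi> j n else 0)"
        by (intro sum.cong refl) (simp add: on)
      also have "\<dots> = \<rho> n" using J by (simp add: \<rho>_def power2_eq_square)
      finally show ?thesis .
    qed
    have dg: "ip (Dd g) (Dd g) = Q n"
      unfolding g_def Dd_sum Q_def K_def by (rule ip_sum[OF J J ell2_Dd[OF ell] ell2_Dd[OF ell]])
    have r0: "0 \<le> \<rho> n" unfolding \<rho>_def by (simp add: sum_nonneg)
    have "((\<rho> n)\<^sup>2)\<^sup>2 \<le> Q n * \<rho> n" using agmon[OF gl, of n] gn gg dg by simp
    moreover have "0 \<le> Q n" using dg ip_self_nonneg by metis
    ultimately have "\<rho> n * (\<rho> n)^3 \<le> \<rho> n * Q n"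
      by (simp add: power2_eq_square power3_eq_cube algebra_simps)
    then have "(\<rho> n)^3 \<le> Q n" using r0 \<open>0 \<le> Q n\<close>
      by (cases "\<rho> n = 0") (auto simp: mult_le_cancel_left)
    then show ?thesis using r0 by simp
  qed
  have hQ: "(Q has_sum (\<Sum>i\<in>J. \<Sum>j\<in>J. K i j * ip (\<phi> i) (\<phi> j))) UNIV"
  proof -
    have "((\<lambda>n. \<Sum>i\<in>J. \<Sum>j\<in>J. K i j * (\<phi> i n * \<phi> j n)) has_sum (\<Sum>i\<in>J. \<Sum>j\<in>J. K i j * ip (\<phi> i) (\<phi> j))) UNIV"
      using J ell by (intro has_sum_sum_fun has_sum_cmult_right ip_has_sum) auto
    moreover have "(\<lambda>n. \<Sum>i\<in>J. \<Sum>j\<in>J. K i j * (\<phi> i n * \<phi> j n)) = Q"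
      by (auto simp: Q_def algebra_simps)
    ultimately show ?thesis by simp
  qed
  have Qv: "(\<Sum>i\<in>J. \<Sum>j\<in>J. K i j * ip (\<phi> i) (\<phi> j)) = (\<Sum>j\<in>J. K j j)"
  proof -
    have "(\<Sum>i\<in>J. \<Sum>j\<in>J. K i j * ip (\<phi> i) (\<phi> j)) = (\<Sum>i\<in>J. \<Sum>j\<in>J. if i = j then K i j else 0)"
      by (intro sum.cong refl) (simp add: on)
    also have "\<dots> = (\<Sum>j\<in>J. K j j)" using J by simp
    finally show ?thesis .
  qed
  have sQ: "Q summable_on UNIV" using hQ summable_on_def by blast
  have s3: "(\<lambda>n. (\<rho> n)^3) summable_on UNIV"
    by (rule summable_on_comparison_test[OF sQ]) (use ptw in auto)
  have "(\<Sum>\<^sub>\<infinity>n. (\<rho> n)^3) \<le> infsum Q UNIV"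
    by (rule infsum_mono[OF s3 sQ]) (use ptw in auto)
  also have "infsum Q UNIV = (\<Sum>j\<in>J. K j j)" using hQ Qv infsumI by metis
  finally show ?thesis using s3 by (simp add: K_def)
qed


definition C0 :: real where "C0 = 2 / (3 * sqrt 3)"

lemma cubic:
  fixes a r :: real
  assumes "r \<ge> 0"
  shows "a * r - r^3 \<le> C0 * (max a 0) powr (3/2)"
proof (cases "a \<le> 0")
  case True
  have "a * r \<le> 0" using True assms by (simp add: mult_nonpos_nonneg)
  moreover have "0 \<le> r^3" using assms by simp
  ultimately have "a * r - r^3 \<le> 0" by linarith
  moreover have "0 \<le> C0 * (max a 0) powr (3/2)" by (simp add: C0_def)
  ultimately show ?thesis by linarith
next
  case False
  then have ap: "a > 0" by simp
  define s where "s = sqrt (a / 3)"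
  have sp: "s > 0" using ap by (simp add: s_def)
  have a3: "a = 3 * s^2" using ap by (simp add: s_def)
  have "(max a 0) powr (3/2) = a powr (1 + 1/2)" using ap by (simp add: max_def)
  also have "\<dots> = a powr 1 * a powr (1/2)" by (rule powr_add)
  also have "\<dots> = a * sqrt a" using ap by (simp add: powr_half_sqrt)
  finally have "(max a 0) powr (3/2) = a * sqrt a" .
  also have "sqrt a = sqrt 3 * s" using ap by (simp add: s_def real_sqrt_divide)
  finally have "C0 * (max a 0) powr (3/2) = 2 * s^3"
    using a3 by (simp add: C0_def power2_eq_square power3_eq_cube field_simps)
  moreover have "0 \<le> (r - s)^2 * (r + 2 * s)" using sp assms by simp
  moreover have "2 * s^3 - (a * r - r^3) = (r - s)^2 * (r + 2 * s)"
    unfolding a3 by (simp add: power2_eq_square power3_eq_cube algebra_simps)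
  ultimately show ?thesis by linarith
qed

definition hh :: "real \<Rightarrow> real \<Rightarrow> real \<Rightarrow> real" where
  "hh g b t = g * (g - 1) * t powr (g - 2) * (C0 * (max (b - t) 0) powr (3/2))"

lemma C0_pos: "C0 > 0" by (simp add: C0_def)

lemma hh_nonneg: "t \<ge> 0 \<Longrightarrow> g \<ge> 1 \<Longrightarrow> hh g b t \<ge> 0"
  unfolding hh_def using C0_pos by (intro mult_nonneg_nonneg) auto

lemma hh_zero: "t \<ge> b \<Longrightarrow> hh g b t = 0"
  unfolding hh_def by simp

lemma hh_int_b:
  assumes g: "g > 1" and b: "b \<ge> 0"
  shows "(hh g b has_integral (g * (g - 1) * C0 * Beta (g - 1) (5/2) * b powr (g + 1/2))) {0..b}"
proof (cases "b = 0")
  case True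
  then show ?thesis by (simp add: has_integral_refl)
next
  case False
  then have bp: "b > 0" using b by simp
  have B0: "((\<lambda>s. s powr (g - 1 - 1) * (1 - s) powr (5/2 - 1)) has_integral Beta (g - 1) (5/2)) (cbox 0 1)"
    using has_integral_Beta_real[of "g - 1" "5/2"] g by (simp add: cbox_interval)
  have B1: "((\<lambda>t. (t / b) powr (g - 2) * (1 - t / b) powr (3/2)) has_integral (b * Beta (g - 1) (5/2))) {0..b}"
    using has_integral_affinity'[OF B0, of "1/b" 0] bp by (simp add: cbox_interval field_simps)
  define K where "K = g * (g - 1) * C0 * b powr (g - 2) * b powr (3/2)"
  have B2: "((\<lambda>t. K * ((t / b) powr (g - 2) * (1 - t / b) powr (3/2))) has_integral (K * (b * Beta (g - 1) (5/2)))) {0..b}"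
    by (rule has_integral_mult_right[OF B1])
  have eqf: "K * ((t / b) powr (g - 2) * (1 - t / b) powr (3/2)) = hh g b t" if "t \<in> {0..b}" for t
  proof -
    have "1 - t / b = (b - t) / b" using bp by (simp add: field_simps)
    then have e2: "(1 - t / b) powr (3/2) = (b - t) powr (3/2) / b powr (3/2)" by (simp add: powr_divide)
    have e1: "(t / b) powr (g - 2) = t powr (g - 2) / b powr (g - 2)" by (simp add: powr_divide)
    have e3: "max (b - t) 0 = b - t" using that by simp
    have p1: "b powr (g - 2) > 0" "b powr (3/2) > 0" using bp by auto
    show ?thesis unfolding K_def hh_def e1 e2 e3 using p1 by (simp add: field_simps)
  qed
  have val: "K * (b * Beta (g - 1) (5/2)) = g * (g - 1) * C0 * Beta (g - 1) (5/2) * b powr (g + 1/2)"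
  proof -
    have "b powr (g - 2) * b powr (3/2) * b powr 1 = b powr (g - 2 + 3/2 + 1)"
      by (simp only: powr_add)
    also have "g - 2 + 3/2 + 1 = g + 1/2" by simp
    finally have "b powr (g - 2) * b powr (3/2) * b powr 1 = b powr (g + 1/2)" .
    then have "b powr (g - 2) * b powr (3/2) * b = b powr (g + 1/2)" using bp by simp
    moreover have "K * (b * Beta (g - 1) (5/2)) = g * (g - 1) * C0 * Beta (g - 1) (5/2) * (b powr (g - 2) * b powr (3/2) * b)"
      unfolding K_def by (simp only: mult_ac)
    ultimately show ?thesis by simp
  qed
  show ?thesis using has_integral_eq[OF eqf B2] val by simp
qed

lemma hh_int_M:
  assumes g: "g > 1" and b: "b \<ge> 0" and M: "M \<ge> b"
  shows "(hh g b has_integral (g * (g - 1) * C0 * Beta (g - 1) (5/2) * b powr (g + 1/2))) {0..M}"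
proof -
  have z: "(hh g b has_integral 0) {b..M}"
    by (rule has_integral_eq[OF _ has_integral_0]) (simp add: hh_zero)
  show ?thesis using has_integral_combine[OF b M hh_int_b[OF g b] z] by simp
qed

lemma cont_powr: "p > 0 \<Longrightarrow> x \<ge> 0 \<Longrightarrow> continuous_on {x..y} (\<lambda>t::real. t powr p)"
  by (rule continuous_on_powr'[of _ "\<lambda>t. t" "\<lambda>_. p", simplified]) auto

lemma step_int:
  assumes g: "g > 1" and xy: "0 \<le> x" "x \<le> y" and r: "r \<ge> 0" and int: "hh g b integrable_on {x..y}"
  shows "g * (b * r - r^3) * (y powr (g - 1) - x powr (g - 1)) - (g - 1) * r * (y powr g - x powr g)
    \<le> integral {x..y} (hh g b)"
proof -
  define F where "F t = g * (b * r - r^3) * t powr (g - 1) - (g - 1) * r * t powr g" for t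
  define f' where "f' t = g * (g - 1) * t powr (g - 2) * ((b - t) * r - r^3)" for t
  have cF: "continuous_on {x..y} F"
    unfolding F_def using g xy by (intro continuous_intros cont_powr) auto
  have dF: "(F has_vector_derivative f' t) (at t)" if "t \<in> {x<..<y}" for t
  proof -
    have tp: "t > 0" using that xy by auto
    have d: "(F has_real_derivative (g * (b * r - r^3) * ((g - 1) * t powr (g - 1 - 1)) - (g - 1) * r * (g * t powr (g - 1)))) (at t)"
      unfolding F_def
      by (intro DERIV_diff DERIV_cmult has_real_derivative_powr tp)
    have "t powr (g - 2) * t powr 1 = t powr (g - 2 + 1)" by (simp only: powr_add)
    then have "t powr (g - 1) = t powr (g - 2) * t powr 1" by simp
    then have "t powr (g - 1) = t powr (g - 2) * t" using tp by simp
    then have "g * (b * r - r^3) * ((g - 1) * t powr (g - 1 - 1)) - (g - 1) * r * (g * t powr (g - 1)) = f' t"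
      unfolding f'_def by (simp add: algebra_simps)
    with d show ?thesis by (simp add: has_real_derivative_iff_has_vector_derivative)
  qed
  have ftc: "(f' has_integral (F y - F x)) {x..y}"
    by (rule fundamental_theorem_of_calculus_interior[OF xy(2) cF dF])
  have "F y - F x \<le> integral {x..y} (hh g b)"
  proof (rule has_integral_le[OF ftc integrable_integral[OF int]])
    fix t assume t: "t \<in> {x..y}"
    then have t0: "t \<ge> 0" using xy by simp
    have c: "(b - t) * r - r^3 \<le> C0 * (max (b - t) 0) powr (3/2)" by (rule cubic[OF r])
    have "0 \<le> g * (g - 1) * t powr (g - 2)" using g by simp
    from mult_left_mono[OF c this] show "f' t \<le> hh g b t" unfolding f'_def hh_def by (simp add: mult.assoc)
  qed
  then show ?thesis unfolding F_def by (simp add: algebra_simps)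
qed

lemma Gamma_plus1_pos: "(z::real) > 0 \<Longrightarrow> Gamma (z + 1) = z * Gamma z"
  by (rule Gamma_plus1) (auto dest: nonpos_Ints_nonpos)

lemma Gamma_52: "Gamma (5/2 :: real) = 3/4 * sqrt pi"
proof -
  have "Gamma (5/2 :: real) = Gamma (3/2 + 1)" by simp
  also have "\<dots> = 3/2 * Gamma (3/2)" by (rule Gamma_plus1_pos) simp
  also have "Gamma (3/2 :: real) = Gamma (1/2 + 1)" by simp
  also have "\<dots> = 1/2 * Gamma (1/2)" by (rule Gamma_plus1_pos) simp
  finally show ?thesis by (simp add: Gamma_one_half_real)
qed

lemma sqrt_pi_sq: "sqrt pi * sqrt pi = pi"
  using pi_gt_zero by simp

lemma const_g1: "pi / sqrt 3 * L_cl 1 = C0"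
proof -
  have "Gamma (2::real) = Gamma (1 + 1)" by simp
  also have "\<dots> = 1" by (subst Gamma_plus1_pos) auto
  finally have G2: "Gamma (2::real) = 1" .
  have "L_cl 1 = Gamma 2 / (2 * sqrt pi * Gamma (5/2))"
    unfolding L_cl_def by (simp add: numeral_eq_Suc)
  also have "\<dots> = 1 / (2 * sqrt pi * (3/4 * sqrt pi))" by (simp only: G2 Gamma_52)
  also have "\<dots> = 2 / (3 * pi)" using sqrt_pi_sq by (simp add: field_simps)
  finally show ?thesis unfolding C0_def using pi_gt_zero by (simp add: field_simps)
qed

lemma const_g:
  assumes g: "g > 1"
  shows "pi / sqrt 3 * L_cl g = g * (g - 1) * C0 * Beta (g - 1) (5/2)"
proof -
  have Gg: "Gamma (g + 1) = g * Gamma g" using g by (intro Gamma_plus1_pos) simp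
  have Gg1: "Gamma g = (g - 1) * Gamma (g - 1)"
    using Gamma_plus1_pos[of "g - 1"] g by simp
  have G1: "Gamma (g + 1) = g * ((g - 1) * Gamma (g - 1))" using Gg Gg1 by simp
  have e: "g - 1 + 5/2 = g + 3/2" by simp
  have G2: "Gamma (g - 1 + 5/2) = Gamma (g + 3/2)" by (simp only: e)
  have sp: "sqrt pi > 0" by simp
  define A where "A = g * ((g - 1) * Gamma (g - 1)) / Gamma (g + 3/2)"
  have ps: "pi / sqrt pi = sqrt pi" using sqrt_pi_sq sp by (simp add: field_simps)
  have "pi / sqrt 3 * L_cl g = pi / sqrt 3 * (g * ((g - 1) * Gamma (g - 1)) / (2 * sqrt pi * Gamma (g + 3/2)))"
    unfolding L_cl_def G1 by (rule refl)
  also have "\<dots> = A * (pi / sqrt pi) / (2 * sqrt 3)"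
    unfolding A_def by (simp add: divide_simps mult_ac)
  also have "\<dots> = A * sqrt pi / (2 * sqrt 3)" by (simp only: ps)
  also have "\<dots> = g * (g - 1) * C0 * Beta (g - 1) (5/2)"
    unfolding C0_def Beta_def G2 Gamma_52 A_def by (simp add: divide_simps mult_ac)
  finally show ?thesis .
qed


lemma L_cl_nonneg: "g \<ge> 1 \<Longrightarrow> L_cl g \<ge> 0"
proof -
  assume g: "g \<ge> 1"
  have "Gamma (g + 1) > 0" "Gamma (g + 3/2) > 0" using g by (intro Gamma_real_pos, simp)+
  then show ?thesis unfolding L_cl_def by simp
qed

lemma per_n:
  fixes g b :: real and u r :: "nat \<Rightarrow> real"
  assumes g: "g \<ge> 1" and b: "b \<ge> 0" and mono: "\<And>k. k < N \<Longrightarrow> u (Suc k) \<le> u k"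
    and pos: "\<And>k. k < N \<Longrightarrow> u k > 0" and uN: "u N = 0" and r: "\<And>k. k < N \<Longrightarrow> r k \<ge> 0"
  shows "(\<Sum>k<N. g * (b * r k - r k ^ 3) * (u k powr (g - 1) - u (Suc k) powr (g - 1))
            - (g - 1) * r k * (u k powr g - u (Suc k) powr g)) \<le> pi / sqrt 3 * L_cl g * b powr (g + 1/2)"
proof (cases "N = 0")
  case True
  then show ?thesis using L_cl_nonneg[OF g] by simp
next
  case False
  then obtain N' where N': "N = Suc N'" by (cases N) auto
  show ?thesis
  proof (cases "g = 1")
    case True
    have z: "(\<Sum>k<N'. g * (b * r k - r k ^ 3) * (u k powr (g - 1) - u (Suc k) powr (g - 1))
            - (g - 1) * r k * (u k powr g - u (Suc k) powr g)) = 0"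
    proof (intro sum.neutral ballI)
      fix x assume "x \<in> {..<N'}"
      then have "u x > 0" "u (Suc x) > 0" using pos N' by auto
      then show "g * (b * r x - r x ^ 3) * (u x powr (g - 1) - u (Suc x) powr (g - 1))
            - (g - 1) * r x * (u x powr g - u (Suc x) powr g) = 0" using True by simp
    qed
    have "(\<Sum>k<N. g * (b * r k - r k ^ 3) * (u k powr (g - 1) - u (Suc k) powr (g - 1))
            - (g - 1) * r k * (u k powr g - u (Suc k) powr g)) = b * r N' - r N' ^ 3"
      unfolding N' using z True pos[of N'] uN N' by simp
    also have "\<dots> \<le> C0 * (max b 0) powr (3/2)" by (rule cubic) (use r N' in auto)
    also have "\<dots> = pi / sqrt 3 * L_cl g * b powr (g + 1/2)" using True b const_g1 by simp
    finally show ?thesis .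
  next
    case False
    then have g1: "g > 1" using g by simp
    define V where "V = g * (g - 1) * C0 * Beta (g - 1) (5/2) * b powr (g + 1/2)"
    define M where "M = max (u 0) b"
    have hM: "(hh g b has_integral V) {0..M}" unfolding V_def M_def by (rule hh_int_M[OF g1 b]) simp
    have intM: "hh g b integrable_on {0..M}" using hM by blast
    have ule: "u k \<le> u 0 \<and> 0 \<le> u k" if "k \<le> N" for k
      using that
    proof (induction k)
      case 0 then show ?case using pos[of 0] False N' by simp
    next
      case (Suc k)
      then show ?case using mono[of k] pos[of "Suc k"] uN by (cases "Suc k = N") auto
    qed
    define I where "I x = integral {0..x} (hh g b)" for x
    have split: "integral {x..y} (hh g b) = I y - I x" if "0 \<le> x" "x \<le> y" "y \<le> M" for x y
    proof -
      have "hh g b integrable_on {0..y}" by (rule integrable_subinterval_real[OF intM]) (use that in auto)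
      from Henstock_Kurzweil_Integration.integral_combine[OF that(1,2) this] show ?thesis
        unfolding I_def by simp
    qed
    have "(\<Sum>k<N. g * (b * r k - r k ^ 3) * (u k powr (g - 1) - u (Suc k) powr (g - 1))
            - (g - 1) * r k * (u k powr g - u (Suc k) powr g)) \<le> (\<Sum>k<N. I (u k) - I (u (Suc k)))"
    proof (rule sum_mono)
      fix k assume "k \<in> {..<N}"
      then have k: "k < N" by simp
      have a: "0 \<le> u (Suc k)" "u (Suc k) \<le> u k" "u k \<le> M"
        using ule[of "Suc k"] ule[of k] k mono[of k] by (auto simp: M_def)
      have int: "hh g b integrable_on {u (Suc k)..u k}" by (rule integrable_subinterval_real[OF intM]) (use a in auto)
      from step_int[OF g1 a(1,2) r[OF k] int] split[OF a]
      show "g * (b * r k - r k ^ 3) * (u k powr (g - 1) - u (Suc k) powr (g - 1))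
            - (g - 1) * r k * (u k powr g - u (Suc k) powr g) \<le> I (u k) - I (u (Suc k))" by simp
    qed
    also have "\<dots> = I (u 0) - I (u N)" by (rule sum_lessThan_telescope')
    also have "I (u N) = 0" unfolding I_def uN by simp
    also have "I (u 0) \<le> I M"
    proof -
      have "0 \<le> u 0" "u 0 \<le> M" using ule[of 0] by (auto simp: M_def)
      then have "integral {u 0..M} (hh g b) = I M - I (u 0)" using split by simp
      moreover have "0 \<le> integral {u 0..M} (hh g b)"
        by (rule Henstock_Kurzweil_Integration.integral_nonneg[OF integrable_subinterval_real[OF intM]])
           (use \<open>0 \<le> u 0\<close> g in \<open>auto intro: hh_nonneg\<close>)
      ultimately show ?thesis by simp
    qed
    also have "I M = V" unfolding I_def using hM by blast
    finally show ?thesis unfolding V_def using const_g[OF g1] by simp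
  qed
qed


lemma enum_dec:
  fixes F :: "real set"
  assumes "finite F"
  shows "\<exists>ev. bij_betw ev {..<card F} F \<and> (\<forall>i j. i < j \<longrightarrow> j < card F \<longrightarrow> ev j < ev i)"
proof -
  define L where "L = sorted_list_of_set F"
  define N where "N = card F"
  have len: "length L = N" unfolding L_def N_def by (simp add: length_sorted_list_of_set)
  have ss: "sorted_wrt (<) L" unfolding L_def by (rule strict_sorted_list_of_set)
  have setL: "set L = F" unfolding L_def using assms by (simp add: set_sorted_list_of_set)
  define ev where "ev k = L ! (N - Suc k)" for k
  have dec: "ev j < ev i" if "i < j" "j < N" for i j
    unfolding ev_def using sorted_wrt_nth_less[OF ss, of "N - Suc j" "N - Suc i"] that len by simp
  have inj: "inj_on ev {..<N}"
  proof (rule inj_onI)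
    fix i j assume "i \<in> {..<N}" "j \<in> {..<N}" "ev i = ev j"
    then show "i = j" using dec[of i j] dec[of j i] by (cases i j rule: linorder_cases) auto
  qed
  have sub: "ev ` {..<N} \<subseteq> F" unfolding ev_def using len setL by (auto intro!: nth_mem)
  have "card (ev ` {..<N}) = card F" using card_image[OF inj] N_def by simp
  then have "ev ` {..<N} = F" using card_subset_eq[OF assms sub] by simp
  then have "bij_betw ev {..<N} F" using inj unfolding bij_betw_def by simp
  then show ?thesis using dec unfolding N_def by blast
qed

lemma abel:
  fixes x a :: "nat \<Rightarrow> real"
  shows "(\<Sum>k<N. (\<Sum>j\<le>k. x j) * (a k - a (Suc k))) = (\<Sum>k<N. x k * a k) - (\<Sum>k<N. x k) * a N"
  by (induction N) (simp_all add: algebra_simps atMost_Suc lessThan_Suc_atMost[symmetric])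

lemma finite_bound:
  fixes g :: real and b :: "int \<Rightarrow> real" and F :: "real set"
  assumes g: "g \<ge> 1" and bnn: "\<And>n. b n \<ge> 0" and bs: "(\<lambda>n. b n powr (g + 1/2)) summable_on UNIV"
    and F: "finite F" and FS: "F \<subseteq> {e. e > 0 \<and> is_eigenvalue b e}"
  shows "(\<Sum>e\<in>F. \<bar>e\<bar> powr g) \<le> pi / sqrt 3 * L_cl g * (\<Sum>\<^sub>\<infinity>n. b n powr (g + 1/2))"
proof -
  define N where "N = card F"
  obtain ev where bij: "bij_betw ev {..<N} F" and dec: "\<And>i j. i < j \<Longrightarrow> j < N \<Longrightarrow> ev j < ev i"
    using enum_dec[OF F] unfolding N_def by blast
  have evF: "ev k \<in> F" if "k < N" for k using bij that bij_betwE by blast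
  have evp: "ev k > 0" and evE: "is_eigenvalue b (ev k)" if "k < N" for k using evF[OF that] FS by auto
  define \<phi> where "\<phi> k = (SOME \<phi>. eig b (ev k) \<phi> \<and> ip \<phi> \<phi> = 1)" for k
  have ph: "eig b (ev k) (\<phi> k) \<and> ip (\<phi> k) (\<phi> k) = 1" if "k < N" for k
    unfolding \<phi>_def by (rule someI_ex[OF normalize_eig[OF evE[OF that]]])
  have ell: "ell2 (\<phi> k)" if "k < N" for k using ph[OF that] eig_def by blast
  have on: "ip (\<phi> i) (\<phi> j) = (if i = j then 1 else 0)" if "i < N" "j < N" for i j
  proof (cases "i = j")
    case True then show ?thesis using ph that by simp
  next
    case False
    then have "ev i \<noteq> ev j" using dec[of i j] dec[of j i] that by (cases i j rule: linorder_cases) auto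
    then show ?thesis using eig_orth[of b "ev i" "\<phi> i" "ev j" "\<phi> j"] ph that False by simp
  qed
  define K where "K j = ip (Dd (\<phi> j)) (Dd (\<phi> j))" for j
  have en: "((\<lambda>n. b n * (\<phi> j n)\<^sup>2) has_sum (ev j + K j)) UNIV" if "j < N" for j
    using eig_bsum[OF ell[OF that] conjunct1[OF ph[OF that]]] ph[OF that]
    by (simp add: K_def power2_eq_square mult.assoc)
  define \<rho> where "\<rho> k n = (\<Sum>j\<le>k. (\<phi> j n)\<^sup>2)" for k n
  have hb: "((\<lambda>n. b n * \<rho> k n) has_sum (\<Sum>j\<le>k. ev j + K j)) UNIV" if "k < N" for k
  proof -
    have "((\<lambda>n. \<Sum>j\<le>k. b n * (\<phi> j n)\<^sup>2) has_sum (\<Sum>j\<le>k. ev j + K j)) UNIV"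
      using that by (intro has_sum_sum_fun en) auto
    then show ?thesis unfolding \<rho>_def by (simp add: sum_distrib_left)
  qed
  have hr: "(\<rho> k has_sum (real k + 1)) UNIV" if "k < N" for k
  proof -
    have "((\<lambda>n. \<Sum>j\<le>k. \<phi> j n * \<phi> j n) has_sum (\<Sum>j\<le>k. ip (\<phi> j) (\<phi> j))) UNIV"
      using that by (intro has_sum_sum_fun ip_has_sum ell) auto
    moreover have "(\<Sum>j\<le>k. ip (\<phi> j) (\<phi> j)) = real k + 1"
      using that on by simp
    ultimately show ?thesis unfolding \<rho>_def by (simp add: power2_eq_square)
  qed
  have ef: "(\<lambda>n. (\<rho> k n)^3) summable_on UNIV \<and> (\<Sum>\<^sub>\<infinity>n. (\<rho> k n)^3) \<le> (\<Sum>j\<le>k. K j)" if "k < N" for k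
    unfolding \<rho>_def K_def
    by (rule eden_foias) (use that ell on in auto)
  define S3 where "S3 k = (\<Sum>\<^sub>\<infinity>n. (\<rho> k n)^3)" for k
  have h3: "((\<lambda>n. (\<rho> k n)^3) has_sum S3 k) UNIV" if "k < N" for k
    unfolding S3_def using ef[OF that] has_sum_infsum by blast
  define u where "u k = (if k < N then ev k else 0)" for k
  define D1 where "D1 k = u k powr (g - 1) - u (Suc k) powr (g - 1)" for k
  define D2 where "D2 k = u k powr g - u (Suc k) powr g" for k
  define E where "E k = (\<Sum>j\<le>k. ev j)" for k
  have umono: "u (Suc k) \<le> u k" if "k < N" for k
    using dec[of k "Suc k"] evp[OF that] that unfolding u_def by auto
  have upos: "u k > 0" if "k < N" for k using evp[OF that] that unfolding u_def by simp
  have u0: "u k \<ge> 0" for k unfolding u_def using evp by (auto simp: less_imp_le)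
  have D1nn: "D1 k \<ge> 0" if "k < N" for k
    unfolding D1_def using powr_mono2[of "g - 1" "u (Suc k)" "u k"] g u0 umono[OF that] by simp
  have ident: "(\<Sum>k<N. (ev k) powr g) = (\<Sum>k<N. g * E k * D1 k - (g - 1) * (real k + 1) * D2 k)"
  proof -
    have a1: "(\<Sum>k<N. E k * D1 k) = (\<Sum>k<N. (ev k) powr g)"
    proof -
      have "(\<Sum>k<N. E k * D1 k) = (\<Sum>k<N. ev k * u k powr (g - 1)) - (\<Sum>k<N. ev k) * u N powr (g - 1)"
        unfolding E_def D1_def by (rule abel)
      also have "u N powr (g - 1) = 0" by (simp add: u_def)
      also have "(\<Sum>k<N. ev k * u k powr (g - 1)) = (\<Sum>k<N. (ev k) powr g)"
      proof (rule sum.cong[OF refl])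
        fix k assume "k \<in> {..<N}"
        then have k: "k < N" by simp
        have "ev k powr 1 * ev k powr (g - 1) = ev k powr (1 + (g - 1))" by (simp only: powr_add)
        then show "ev k * u k powr (g - 1) = ev k powr g" using evp[OF k] k by (simp add: u_def)
      qed
      finally show ?thesis by simp
    qed
    have a2: "(\<Sum>k<N. (real k + 1) * D2 k) = (\<Sum>k<N. (ev k) powr g)"
    proof -
      have "(\<Sum>k<N. (\<Sum>j\<le>k. (1::real)) * D2 k) = (\<Sum>k<N. 1 * u k powr g) - (\<Sum>k<N. (1::real)) * u N powr g"
        unfolding D2_def by (rule abel)
      also have "u N powr g = 0" by (simp add: u_def)
      also have "(\<Sum>k<N. 1 * u k powr g) = (\<Sum>k<N. (ev k) powr g)" by (intro sum.cong) (auto simp: u_def)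
      finally show ?thesis by (simp add: add.commute)
    qed
    have "(\<Sum>k<N. g * E k * D1 k - (g - 1) * (real k + 1) * D2 k) = g * (\<Sum>k<N. E k * D1 k) - (g - 1) * (\<Sum>k<N. (real k + 1) * D2 k)"
      by (simp add: sum_subtractf sum_distrib_left mult.assoc)
    also have "\<dots> = (\<Sum>k<N. (ev k) powr g)" unfolding a1 a2 by (simp add: algebra_simps)
    finally show ?thesis by simp
  qed
  define W where "W n = (\<Sum>k<N. g * (b n * \<rho> k n - (\<rho> k n)^3) * D1 k - (g - 1) * \<rho> k n * D2 k)" for n
  define WV where "WV = (\<Sum>k<N. g * ((\<Sum>j\<le>k. ev j + K j) - S3 k) * D1 k - (g - 1) * (real k + 1) * D2 k)"
  have hW: "(W has_sum WV) UNIV"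
    unfolding W_def WV_def
  proof (intro has_sum_sum_fun)
    fix k assume "k \<in> {..<N}"
    then have k: "k < N" by simp
    show "((\<lambda>n. g * (b n * \<rho> k n - (\<rho> k n)^3) * D1 k - (g - 1) * \<rho> k n * D2 k) has_sum
        (g * ((\<Sum>j\<le>k. ev j + K j) - S3 k) * D1 k - (g - 1) * (real k + 1) * D2 k)) UNIV"
      by (intro has_sum_diff_real has_sum_cmult_left has_sum_cmult_right hb[OF k] h3[OF k] hr[OF k])
  qed simp
  have step1: "(\<Sum>k<N. (ev k) powr g) \<le> WV"
    unfolding ident WV_def
  proof (rule sum_mono)
    fix k assume "k \<in> {..<N}"
    then have k: "k < N" by simp
    have "E k \<le> (\<Sum>j\<le>k. ev j + K j) - S3 k"
      using ef[OF k] unfolding E_def S3_def by (simp add: sum.distrib)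
    then have "g * E k * D1 k \<le> g * ((\<Sum>j\<le>k. ev j + K j) - S3 k) * D1 k"
      using D1nn[OF k] g by (intro mult_right_mono mult_left_mono) auto
    then show "g * E k * D1 k - (g - 1) * (real k + 1) * D2 k \<le> g * ((\<Sum>j\<le>k. ev j + K j) - S3 k) * D1 k - (g - 1) * (real k + 1) * D2 k"
      by simp
  qed
  define C where "C = pi / sqrt 3 * L_cl g"
  have Wle: "W n \<le> C * b n powr (g + 1/2)" for n
    unfolding W_def D1_def D2_def C_def
  proof (rule per_n[OF g bnn])
    show "u N = 0" by (simp add: u_def)
    fix k assume k: "k < N"
    show "u (Suc k) \<le> u k" by (rule umono[OF k])
    show "u k > 0" by (rule upos[OF k])
    show "\<rho> k n \<ge> 0" unfolding \<rho>_def by (simp add: sum_nonneg)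
  qed
  have "WV \<le> (\<Sum>\<^sub>\<infinity>n. C * b n powr (g + 1/2))"
    using has_sum_mono[OF hW has_sum_infsum[OF summable_on_cmult_right[OF bs]]] Wle by blast
  also have "\<dots> = C * (\<Sum>\<^sub>\<infinity>n. b n powr (g + 1/2))" by (rule infsum_cmult_right) (use bs in simp)
  finally have "(\<Sum>k<N. (ev k) powr g) \<le> C * (\<Sum>\<^sub>\<infinity>n. b n powr (g + 1/2))" using step1 by simp
  moreover have "(\<Sum>e\<in>F. \<bar>e\<bar> powr g) = (\<Sum>k<N. (ev k) powr g)"
  proof -
    have "(\<Sum>e\<in>F. \<bar>e\<bar> powr g) = (\<Sum>k<N. \<bar>ev k\<bar> powr g)"
      using sum.reindex_bij_betw[OF bij, of "\<lambda>e. \<bar>e\<bar> powr g"] by simp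
    also have "\<dots> = (\<Sum>k<N. (ev k) powr g)" proof (rule sum.cong[OF refl])
      fix k assume "k \<in> {..<N}"
      then have "ev k > 0" using evp by simp
      then show "\<bar>ev k\<bar> powr g = ev k powr g" by simp
    qed
    finally show ?thesis .
  qed
  ultimately show ?thesis unfolding C_def by simp
qed

theorem corollary1p4:
  fixes \<gamma> :: real and b :: "int \<Rightarrow> real"
  assumes "\<gamma> \<ge> 1"
    and "\<And>n. b n \<ge> 0"
    and "(\<lambda>n. \<bar>b n\<bar> powr (\<gamma> + 1/2)) summable_on UNIV"
  shows "(\<lambda>e. \<bar>e\<bar> powr \<gamma>) summable_on {e. e > 0 \<and> is_eigenvalue b e}
    \<and> (\<Sum>\<^sub>\<infinity>e\<in>{e. e > 0 \<and> is_eigenvalue b e}. \<bar>e\<bar> powr \<gamma>)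
        \<le> pi / sqrt 3 * L_cl \<gamma> * (\<Sum>\<^sub>\<infinity>n\<in>UNIV. b n powr (\<gamma> + 1/2))"
proof -
  define S where "S = {e. e > 0 \<and> is_eigenvalue b e}"
  define R where "R = pi / sqrt 3 * L_cl \<gamma> * (\<Sum>\<^sub>\<infinity>n\<in>UNIV. b n powr (\<gamma> + 1/2))"
  have "(\<lambda>n. \<bar>b n\<bar> powr (\<gamma> + 1/2)) = (\<lambda>n. b n powr (\<gamma> + 1/2))"
    using assms(2) by (simp add: abs_of_nonneg)
  then have bs: "(\<lambda>n. b n powr (\<gamma> + 1/2)) summable_on UNIV" using assms(3) by simp
  have fb: "sum (\<lambda>e. \<bar>e\<bar> powr \<gamma>) F \<le> R" if "finite F" "F \<subseteq> S" for F
    unfolding R_def by (rule finite_bound[OF assms(1) assms(2) bs that(1)]) (use that(2) S_def in simp)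
  have sm: "(\<lambda>e. \<bar>e\<bar> powr \<gamma>) summable_on S"
  proof (rule nonneg_bdd_above_summable_on)
    show "bdd_above (sum (\<lambda>e. \<bar>e\<bar> powr \<gamma>) ` {F. F \<subseteq> S \<and> finite F})"
      using fb by (intro bdd_aboveI[where M = R]) auto
  qed simp
  have "(\<Sum>\<^sub>\<infinity>e\<in>S. \<bar>e\<bar> powr \<gamma>) \<le> R"
    by (rule infsum_le_finite_sums[OF sm fb])
  with sm show ?thesis unfolding S_def R_def by simp
qed

end
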